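(* Let $G=([n],E)$ be a graph and let $\pi\in S_n$ be a semi-proper permutation model of $G$. Then $\pi$ is a proper permutation model of $G$ if and only if, for every $i\in[n]$, $$ i + d^+(i) = \pi(i) + d^-(i).$$
   Context: $[n]=\{0,\dots,n-1\}$ and $S_n$ is the set of permutations of $[n]$. For $\pi\in S_n$, a pair $i,j\in[n]$ is a $\pi$-inversion if $(i-j)(\pi(i)-\pi(j))<0$. For a graph $G=([n],E)$, $\pi\in S_n$ is a proper permutation model of $G$ if for all $i,j$: $\{i,j\}\in E$ iff $i,j$ is a $\pi$-inversion; it is a semi-proper permutation model if every edge $\{i,j\}\in E$ is a $\pi$-inversion. $N^+(i)=\{j\in N(i): j>i\}$, $N^-(i)=\{j\in N(i): j<i\}$, $d^+(i)=|N^+(i)|$, $d^-(i)=|N^-(i)|$ (here $N(i)$ is the neighborhood of $i$ in the undirected graph $G$). *)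

theory Defs
  imports Main "HOL-Combinatorics.Permutations"
begin

definition simple_graph :: "nat \<Rightarrow> nat set set \<Rightarrow> bool" where
  "simple_graph n E \<longleftrightarrow> (\<forall>e\<in>E. \<exists>i j. e = {i, j} \<and> i \<noteq> j \<and> i < n \<and> j < n)"

definition is_inversion :: "(nat \<Rightarrow> nat) \<Rightarrow> nat \<Rightarrow> nat \<Rightarrow> bool" where
  "is_inversion \<pi> i j \<longleftrightarrow> (int i - int j) * (int (\<pi> i) - int (\<pi> j)) < 0"

definition proper_perm_model :: "nat \<Rightarrow> nat set set \<Rightarrow> (nat \<Rightarrow> nat) \<Rightarrow> bool" where
  "proper_perm_model n E \<pi> \<longleftrightarrow>
     (\<forall>i<n. \<forall>j<n. {i, j} \<in> E \<longleftrightarrow> is_inversion \<pi> i j)"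

definition semi_proper_perm_model :: "nat \<Rightarrow> nat set set \<Rightarrow> (nat \<Rightarrow> nat) \<Rightarrow> bool" where
  "semi_proper_perm_model n E \<pi> \<longleftrightarrow>
     (\<forall>i<n. \<forall>j<n. {i, j} \<in> E \<longrightarrow> is_inversion \<pi> i j)"

definition nbhd :: "nat \<Rightarrow> nat set set \<Rightarrow> nat \<Rightarrow> nat set" where
  "nbhd n E i = {j. j < n \<and> {i, j} \<in> E}"

definition nbhd_plus :: "nat \<Rightarrow> nat set set \<Rightarrow> nat \<Rightarrow> nat set" where
  "nbhd_plus n E i = {j \<in> nbhd n E i. j > i}"

definition nbhd_minus :: "nat \<Rightarrow> nat set set \<Rightarrow> nat \<Rightarrow> nat set" where
  "nbhd_minus n E i = {j \<in> nbhd n E i. j < i}"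

definition deg_plus :: "nat \<Rightarrow> nat set set \<Rightarrow> nat \<Rightarrow> nat" where
  "deg_plus n E i = card (nbhd_plus n E i)"

definition deg_minus :: "nat \<Rightarrow> nat set set \<Rightarrow> nat \<Rightarrow> nat" where
  "deg_minus n E i = card (nbhd_minus n E i)"

end

theory Submission
  imports Defs
begin

lemma inv_sym: "is_inversion \<pi> i j \<longleftrightarrow> is_inversion \<pi> j i"
  unfolding is_inversion_def by (simp add: algebra_simps mult_less_0_iff)

lemma inv_lt: "i < j \<Longrightarrow> is_inversion \<pi> i j \<longleftrightarrow> \<pi> j < \<pi> i"
  unfolding is_inversion_def by (auto simp: mult_less_0_iff)

lemma key_identity:
  assumes p: "\<pi> permutes {..<n}" and i: "i < n"
  shows "i + card {j. j<n \<and> i<j \<and> \<pi> j < \<pi> i} = \<pi> i + card {j. j<i \<and> \<pi> i < \<pi> j}"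
proof -
  let ?A = "{j. j<n \<and> i<j \<and> \<pi> j < \<pi> i}"
  let ?B = "{j. j<i \<and> \<pi> i < \<pi> j}"
  let ?C = "{j. j<i \<and> \<pi> j < \<pi> i}"
  let ?D = "{j. j<n \<and> \<pi> j < \<pi> i}"
  have bij: "bij_betw \<pi> {..<n} {..<n}" using p by (rule permutes_imp_bij)
  have inj: "inj_on \<pi> {..<n}" using bij bij_betw_def by blast
  have pin: "\<pi> i < n" using bij i by (auto simp: bij_betw_def)
  have "\<pi> ` ?D = {..<\<pi> i}"
  proof
    show "\<pi> ` ?D \<subseteq> {..<\<pi> i}" by auto
    show "{..<\<pi> i} \<subseteq> \<pi> ` ?D"
    proof
      fix y assume "y \<in> {..<\<pi> i}"
      then have "y \<in> \<pi> ` {..<n}" using bij pin by (auto simp: bij_betw_def)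
      then obtain j where "j<n" "y = \<pi> j" by auto
      then show "y \<in> \<pi> ` ?D" using \<open>y \<in> {..<\<pi> i}\<close> by auto
    qed
  qed
  moreover have "inj_on \<pi> ?D" using inj by (rule inj_on_subset) auto
  ultimately have cD: "card ?D = \<pi> i" by (metis card_image card_lessThan)
  have "?D = ?C \<union> ?A" using i by auto (metis linorder_neqE_nat less_irrefl)
  moreover have "?C \<inter> ?A = {}" by auto
  ultimately have "card ?D = card ?C + card ?A" by (simp add: card_Un_disjoint)
  have neq: "\<And>j. j < i \<Longrightarrow> \<pi> j \<noteq> \<pi> i" using inj i by (metis inj_onD lessThan_iff less_irrefl order.strict_trans)
  have "{..<i} = ?C \<union> ?B" using neq by auto (metis linorder_neqE_nat)
  moreover have "?C \<inter> ?B = {}" by auto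
  ultimately have "i = card ?C + card ?B" by (metis card_Un_disjoint card_lessThan finite_Un finite_lessThan)
  show ?thesis using \<open>card ?D = card ?C + card ?A\<close> \<open>i = card ?C + card ?B\<close> cD by linarith
qed

theorem lemma1:
  fixes n :: nat and E :: "nat set set" and \<pi> :: "nat \<Rightarrow> nat"
  assumes "simple_graph n E"
    and "\<pi> permutes {..<n}"
    and "semi_proper_perm_model n E \<pi>"
  shows "proper_perm_model n E \<pi> \<longleftrightarrow>
         (\<forall>i<n. i + deg_plus n E i = \<pi> i + deg_minus n E i)"
proof -
  define A where "A i = {j. j<n \<and> i<j \<and> \<pi> j < \<pi> i}" for i
  define B where "B i = {j. j<i \<and> \<pi> i < \<pi> j}" for i
  have bij: "bij_betw \<pi> {..<n} {..<n}" using assms(2) by (rule permutes_imp_bij)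
  have pn: "\<And>j. j < n \<Longrightarrow> \<pi> j < n" using bij by (auto simp: bij_betw_def)
  have key: "\<And>i. i<n \<Longrightarrow> i + card (A i) = \<pi> i + card (B i)"
    unfolding A_def B_def using key_identity[OF assms(2)] by blast
  have sp: "\<And>i j. i<n \<Longrightarrow> j<n \<Longrightarrow> {i,j} \<in> E \<Longrightarrow> is_inversion \<pi> i j"
    using assms(3) unfolding semi_proper_perm_model_def by blast
  have plusA: "\<And>i. i<n \<Longrightarrow> nbhd_plus n E i \<subseteq> A i"
  proof
    fix i j assume i: "i<n" and "j \<in> nbhd_plus n E i"
    then have j: "j<n" "{i,j} \<in> E" "i<j" unfolding nbhd_plus_def nbhd_def by auto
    then have "is_inversion \<pi> i j" using sp i by blast
    then have "\<pi> j < \<pi> i" using inv_lt[OF j(3)] by blast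
    then show "j \<in> A i" unfolding A_def using j by simp
  qed
  have minusB: "\<And>i. i<n \<Longrightarrow> nbhd_minus n E i \<subseteq> B i"
  proof
    fix i j assume i: "i<n" and "j \<in> nbhd_minus n E i"
    then have j: "j<n" "{i,j} \<in> E" "j<i" unfolding nbhd_minus_def nbhd_def by auto
    then have "is_inversion \<pi> i j" using sp i by blast
    then have "is_inversion \<pi> j i" using inv_sym by blast
    then have "\<pi> i < \<pi> j" using inv_lt[OF j(3)] by blast
    then show "j \<in> B i" unfolding B_def using j by simp
  qed
  have finA: "finite (A i)" for i unfolding A_def by auto
  have finB: "finite (B i)" for i unfolding B_def by auto
  show ?thesis
  proof
    assume pr: "proper_perm_model n E \<pi>"
    have e: "\<And>i j. i<n \<Longrightarrow> j<n \<Longrightarrow> {i,j} \<in> E \<longleftrightarrow> is_inversion \<pi> i j"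
      using pr unfolding proper_perm_model_def by blast
    show "\<forall>i<n. i + deg_plus n E i = \<pi> i + deg_minus n E i"
    proof (intro allI impI)
      fix i assume i: "i < n"
      have "nbhd_plus n E i = A i"
      proof (intro equalityI subsetI)
        fix j assume "j \<in> nbhd_plus n E i" then show "j \<in> A i" using plusA[OF i] by blast
      next
        fix j assume "j \<in> A i"
        then have j: "j<n" "i<j" "\<pi> j < \<pi> i" unfolding A_def by auto
        then have "is_inversion \<pi> i j" using inv_lt[OF j(2)] by blast
        then have "{i,j} \<in> E" using e[OF i j(1)] by blast
        then show "j \<in> nbhd_plus n E i" unfolding nbhd_plus_def nbhd_def using j by simp
      qed
      moreover have "nbhd_minus n E i = B i"
      proof (intro equalityI subsetI)
        fix j assume "j \<in> nbhd_minus n E i" then show "j \<in> B i" using minusB[OF i] by blast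
      next
        fix j assume "j \<in> B i"
        then have j: "j<i" "\<pi> i < \<pi> j" unfolding B_def by auto
        have jn: "j<n" using j i by simp
        have "is_inversion \<pi> j i" using inv_lt[OF j(1)] j by blast
        then have "is_inversion \<pi> i j" using inv_sym by blast
        then have "{i,j} \<in> E" using e[OF i jn] by blast
        then show "j \<in> nbhd_minus n E i" unfolding nbhd_minus_def nbhd_def using j jn by simp
      qed
      ultimately show "i + deg_plus n E i = \<pi> i + deg_minus n E i"
        using key[OF i] unfolding deg_plus_def deg_minus_def by simp
    qed
  next
    assume c: "\<forall>i<n. i + deg_plus n E i = \<pi> i + deg_minus n E i"
    show "proper_perm_model n E \<pi>"
      unfolding proper_perm_model_def
    proof (intro allI impI iffI)
      fix i j assume "i<n" "j<n" "{i,j} \<in> E" then show "is_inversion \<pi> i j" using sp by blast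
    next
      fix i j assume ij: "i<n" "j<n" "is_inversion \<pi> i j"
      show "{i,j} \<in> E"
      proof (rule ccontr)
        assume ne: "{i,j} \<notin> E"
        define S where "S = {k. k<n \<and> (\<exists>l<n. is_inversion \<pi> k l \<and> {k,l} \<notin> E)}"
        have "i \<in> S" unfolding S_def using ij ne by blast
        define m where "m = (LEAST k. k \<in> S)"
        have mS: "m \<in> S" using \<open>i \<in> S\<close> m_def by (metis LeastI)
        have mmin: "\<And>k. k \<in> S \<Longrightarrow> m \<le> k" using m_def by (simp add: Least_le)
        obtain l where l: "l<n" "is_inversion \<pi> m l" "{m,l} \<notin> E" and mn: "m<n" using mS unfolding S_def by blast
        have "l \<noteq> m" proof assume "l = m" then show False using l(2) unfolding is_inversion_def by simp qed
        have "\<not> l < m"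
        proof
          assume "l < m"
          have "is_inversion \<pi> l m" using l(2) inv_sym by blast
          moreover have "{l,m} \<notin> E" using l(3) by (simp add: insert_commute)
          ultimately have "l \<in> S" unfolding S_def using l(1) mn by blast
          then show False using mmin[of l] \<open>l<m\<close> by simp
        qed
        then have "m < l" using \<open>l \<noteq> m\<close> by simp
        then have "l \<in> A m - nbhd_plus n E m"
          unfolding A_def nbhd_plus_def nbhd_def using l inv_lt[OF \<open>m<l\<close>] by auto
        then have "card (nbhd_plus n E m) < card (A m)"
          using plusA[OF mn] finA by (metis Diff_eq_empty_iff empty_iff psubsetI psubset_card_mono)
        then have "card (nbhd_minus n E m) < card (B m)"
        proof -
          have "m + card (nbhd_plus n E m) = \<pi> m + card (nbhd_minus n E m)"
            using c mn unfolding deg_plus_def deg_minus_def by blast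
          then show ?thesis using key[OF mn] \<open>card (nbhd_plus n E m) < card (A m)\<close> by linarith
        qed
        then have "\<not> B m \<subseteq> nbhd_minus n E m" using card_mono[OF finite_subset[OF minusB[OF mn] finB[of m]]] by (meson leD)
        then obtain k where k: "k \<in> B m" "k \<notin> nbhd_minus n E m" by blast
        then have kl: "k < m" "\<pi> m < \<pi> k" unfolding B_def by auto
        then have "{m,k} \<notin> E" using k(2) mn unfolding nbhd_minus_def nbhd_def by auto
        moreover have "is_inversion \<pi> m k" using kl inv_lt[OF kl(1)] inv_sym by blast
        moreover have "k < n" using kl mn by simp
        ultimately have "is_inversion \<pi> k m" "{k,m} \<notin> E" "k<n" using inv_sym by (auto simp: insert_commute)
        then have "k \<in> S" unfolding S_def using mn by blast
        then show False using mmin[of k] kl by simp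
      qed
    qed
  qed
qed

end
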